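(* Let $\Gamma$ be a labeled oriented tree of Coxeter type with vertex set $\mathbf{x}$, and let $e=(x\xrightarrow{w}y)$ be an edge of $\Gamma$, with relator $r_e=xw(wy)^{-1}$. Then, in the group $\langle \mathbf{x}\mid x^2,\ x\in\mathbf{x}\rangle$, the relator $r_e$ reduces, up to cyclic permutation, to $\bar r_e=(yx)^{m_e}$ for some odd integer $m_e\ge 1$.
   Context: A labeled oriented tree (LOT) $\Gamma$ is a finite tree with vertex set $\mathbf{x}$ whose edges are oriented and each edge is labeled by a (possibly empty) word $w$ in the letters $\mathbf{x}^{\pm1}$; $e=(x\xrightarrow{w}y)$ denotes the edge from $x$ to $y$ labeled $w$. Its presentation is $P(\Gamma)=\langle \mathbf{x}\mid r_e,\ e \text{ an edge}\rangle$ with $r_e=xw(wy)^{-1}$. $\Gamma$ is of Coxeter type if for every edge $e=(x\xrightarrow{w}y)$, every letter $z\neq x,y$ occurs in $w$ only with even (positive or negative) exponent, i.e. only in syllables $z^p$ with $p$ even. *)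

theory Defs
  imports Main
begin

text \<open>Letters of words in the alphabet x^{+-1}: a pair (generator, inverted?).
  (z, False) is z, (z, True) is z^{-1}.\<close>
type_synonym 'a letter = "'a \<times> bool"

definition inv_word :: "'a letter list \<Rightarrow> 'a letter list" where
  "inv_word w = rev (map (\<lambda>(a, b). (a, \<not> b)) w)"

text \<open>An oriented edge x --w--> y is a triple (x, w, y). A LOT is given by its vertex set
  and its list of edges; its underlying graph must be a finite tree (connected, |E| = |V| - 1).\<close>
definition edge_rel :: "('a \<times> 'a letter list \<times> 'a) list \<Rightarrow> ('a \<times> 'a) set" where
  "edge_rel E = {(x, y) | x w y. (x, w, y) \<in> set E} \<union> {(y, x) | x w y. (x, w, y) \<in> set E}"

definition is_LOT :: "'a set \<Rightarrow> ('a \<times> 'a letter list \<times> 'a) list \<Rightarrow> bool" where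
  "is_LOT V E \<longleftrightarrow> finite V \<and> V \<noteq> {} \<and>
     (\<forall>(x, w, y) \<in> set E. x \<in> V \<and> y \<in> V \<and> x \<noteq> y \<and> fst ` set w \<subseteq> V) \<and>
     length E + 1 = card V \<and>
     (\<forall>a \<in> V. \<forall>b \<in> V. (a, b) \<in> (edge_rel E)\<^sup>*)"

definition expsum :: "'a letter list \<Rightarrow> int" where
  "expsum s = (\<Sum>l\<leftarrow>s. if snd l then -1 else 1)"

text \<open>Every letter z different from x, y occurs in w only in syllables z^p
  (maximal subwords in the letters z^{+-1}) with p even.\<close>
definition coxeter_edge :: "'a \<Rightarrow> 'a letter list \<Rightarrow> 'a \<Rightarrow> bool" where
  "coxeter_edge x w y \<longleftrightarrow>
     (\<forall>u s v z. w = u @ s @ v \<and> s \<noteq> [] \<and> (\<forall>l \<in> set s. fst l = z) \<and>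
        (u = [] \<or> fst (last u) \<noteq> z) \<and> (v = [] \<or> fst (hd v) \<noteq> z) \<and>
        z \<noteq> x \<and> z \<noteq> y \<longrightarrow> even (expsum s))"

definition coxeter_type :: "('a \<times> 'a letter list \<times> 'a) list \<Rightarrow> bool" where
  "coxeter_type E \<longleftrightarrow> (\<forall>(x, w, y) \<in> set E. coxeter_edge x w y)"

definition relator :: "'a \<Rightarrow> 'a letter list \<Rightarrow> 'a \<Rightarrow> 'a letter list" where
  "relator x w y = [(x, False)] @ w @ inv_word (w @ [(y, False)])"

text \<open>The group <x | x^2, x in x>: a letter z^{+-1} maps to the generator z (= z^{-1});
  elements are represented by their unique reduced words (no two adjacent equal letters).\<close>
fun push :: "'a \<Rightarrow> 'a list \<Rightarrow> 'a list" where
  "push a [] = [a]"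
| "push a (b # bs) = (if a = b then bs else a # b # bs)"

fun cox_reduce :: "'a list \<Rightarrow> 'a list" where
  "cox_reduce [] = []"
| "cox_reduce (a # w) = push a (cox_reduce w)"

definition to_cox :: "'a letter list \<Rightarrow> 'a list" where
  "to_cox w = cox_reduce (map fst w)"

end

theory Submission
  imports Defs
begin

fun rd :: "'a list \<Rightarrow> bool" where
  "rd (a # b # t) = (a \<noteq> b \<and> rd (b # t))"
| "rd _ = True"

lemma rd_tl: "rd (a # t) \<Longrightarrow> rd t"
  by (cases t) auto

lemma rd_push: "rd r \<Longrightarrow> rd (push a r)"
proof (cases r)
  case (Cons b bs)
  assume "rd r" then show ?thesis using Cons by (auto intro: rd_tl)
qed simp

lemma rd_cox: "rd (cox_reduce w)"
  by (induction w) (auto intro: rd_push)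

lemma push_push: "rd r \<Longrightarrow> push a (push a r) = r"
proof (cases r)
  case (Cons b bs)
  assume r: "rd r"
  show ?thesis
  proof (cases "a = b")
    case True
    then show ?thesis using Cons r by (cases bs) auto
  qed (use Cons in auto)
qed simp

lemma cox_reduce_rd: "rd r \<Longrightarrow> cox_reduce r = r"
proof (induction r)
  case (Cons a r)
  then have "cox_reduce r = r" by (auto intro: rd_tl)
  then show ?case using Cons.prems by (cases r) auto
qed simp

lemma cr_append: "cox_reduce (A @ B) = foldr push A (cox_reduce B)"
  by (induction A) auto

lemma rd_foldr: "rd R \<Longrightarrow> rd (foldr push t R)"
  by (induction t) (auto intro: rd_push)

lemma cr_app_right: "cox_reduce (A @ B) = cox_reduce (A @ cox_reduce B)"
  by (simp add: cr_append cox_reduce_rd rd_cox)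

lemma foldr_push_push:
  assumes "rd R" shows "foldr push (push c t) R = push c (foldr push t R)"
proof (cases t)
  case (Cons b bs)
  show ?thesis
  proof (cases "c = b")
    case True
    then show ?thesis using Cons push_push[OF rd_foldr[OF assms, of bs]] by simp
  qed (use Cons in auto)
qed simp

lemma cr_app_left: "cox_reduce (A @ B) = cox_reduce (cox_reduce A @ B)"
proof -
  have "foldr push (cox_reduce A) R = foldr push A R" if "rd R" for R
    using that by (induction A) (auto simp: foldr_push_push)
  then show ?thesis by (simp add: cr_append rd_cox)
qed

lemma cr_rev_cancel: "cox_reduce (w @ rev w) = []"
proof (induction w)
  case (Cons a w)
  have "cox_reduce ((w @ rev w) @ [a]) = cox_reduce (cox_reduce (w @ rev w) @ [a])"
    by (rule cr_app_left)
  then show ?case using Cons by simp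
qed simp

lemma rd_rev: "rd r \<Longrightarrow> rd (rev r)"
proof (induction r rule: rd.induct)
  case (1 a b t)
  then have "rd (rev t @ [b])" by simp
  then show ?case using 1 
  proof -
    have "rd (xs @ [b]) \<Longrightarrow> a \<noteq> b \<Longrightarrow> rd (xs @ [b, a])" for xs
      by (induction xs rule: rd.induct) simp_all
    then show ?thesis using 1 \<open>rd (rev t @ [b])\<close> by simp
  qed
qed auto

lemma cr_rev: "cox_reduce (rev a) = rev (cox_reduce a)"
proof -
  have key: "cox_reduce b = cox_reduce (rev a)" if "cox_reduce (a @ b) = []" for b
  proof -
    have "cox_reduce (rev a @ a @ b) = cox_reduce (cox_reduce (rev a @ a) @ b)"
      using cr_app_left[of "rev a @ a" b] by simp
    also have "cox_reduce (rev a @ a) = []" using cr_rev_cancel[of "rev a"] by simp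
    finally have 1: "cox_reduce (rev a @ a @ b) = cox_reduce b" by simp
    have "cox_reduce (rev a @ a @ b) = cox_reduce (rev a @ cox_reduce (a @ b))"
      using cr_app_right[of "rev a" "a @ b"] by simp
    with 1 that show ?thesis by simp
  qed
  have "cox_reduce (a @ rev (cox_reduce a)) = cox_reduce (cox_reduce a @ rev (cox_reduce a))"
    by (rule cr_app_left)
  also have "\<dots> = []" by (rule cr_rev_cancel)
  finally have "cox_reduce (rev (cox_reduce a)) = cox_reduce (rev a)" by (rule key)
  then show ?thesis using cox_reduce_rd[OF rd_rev[OF rd_cox[of a]]] by simp
qed

lemma set_push: "set (push a r) \<subseteq> insert a (set r)"
  by (cases r) auto

lemma set_cox: "set (cox_reduce w) \<subseteq> set w"
  by (induction w) (use set_push in fastforce)+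

lemma count_push: "even (count_list (push a r) b) = even (count_list (a # r) b)"
  by (cases r) auto

lemma count_cox: "even (count_list (cox_reduce w) b) = even (count_list w b)"
proof (induction w)
  case (Cons a w)
  have "even (count_list (cox_reduce (a # w)) b) = even (count_list (a # cox_reduce w) b)"
    by (simp add: count_push)
  then show ?case using Cons by (auto split: if_splits)
qed simp

lemma expsum_even: "even (expsum s) = even (length s)"
  by (induction s) (auto simp: expsum_def)


lemma foldr_push_even: "rd R \<Longrightarrow> foldr push (replicate (2 * k) z) R = R"
proof (induction k)
  case (Suc k)
  have "replicate (2 * Suc k) z = z # z # replicate (2 * k) z" by simp
  then show ?case using Suc push_push[OF Suc.prems] by simp
qed simp

lemma stepA: "coxeter_edge x w y \<Longrightarrow> set (cox_reduce (map fst w)) \<subseteq> {x, y}"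
proof (induction "length w" arbitrary: w rule: less_induct)
  case less
  show ?case
  proof (cases w)
    case Nil
    then show ?thesis by simp
  next
    case (Cons l w')
    show ?thesis
    proof (cases "fst l \<in> {x, y}")
      case True
      have "coxeter_edge x w' y" unfolding coxeter_edge_def
      proof (intro allI impI)
        fix u s v z
        assume H: "w' = u @ s @ v \<and> s \<noteq> [] \<and> (\<forall>m\<in>set s. fst m = z) \<and>
          (u = [] \<or> fst (last u) \<noteq> z) \<and> (v = [] \<or> fst (hd v) \<noteq> z) \<and> z \<noteq> x \<and> z \<noteq> y"
        have "fst (last (l # u)) \<noteq> z" using H True by (cases u) auto
        then show "even (expsum s)"
          using less.prems[unfolded coxeter_edge_def, rule_format, of "l # u" s v z] H Cons by auto
      qed
      then have "set (cox_reduce (map fst w')) \<subseteq> {x, y}" using less.hyps Cons by simp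
      then show ?thesis using Cons True set_push[of "fst l" "cox_reduce (map fst w')"] by auto
    next
      case False
      define z where "z = fst l"
      define s where "s = takeWhile (\<lambda>m. fst m = z) w"
      define v where "v = dropWhile (\<lambda>m. fst m = z) w"
      have wsv: "w = s @ v" unfolding s_def v_def by simp
      have sne: "s \<noteq> []" unfolding s_def z_def using Cons by simp
      have sz: "\<forall>m\<in>set s. fst m = z" unfolding s_def by (auto dest: set_takeWhileD)
      have vz: "v = [] \<or> fst (hd v) \<noteq> z" unfolding v_def using hd_dropWhile by blast
      have "even (expsum s)"
        using less.prems[unfolded coxeter_edge_def, rule_format, of "[]" s v z] wsv sne sz vz False z_def
        by auto
      then obtain k where k: "length s = 2 * k" using expsum_even by (metis evenE)
      have ms: "map fst s = replicate (2 * k) z"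
        using replicate_length_same[of "map fst s" z] sz k by auto
      have "cox_reduce (map fst w) = cox_reduce (map fst v)"
        using wsv ms foldr_push_even[OF rd_cox] by (simp add: cr_append)
      moreover have "coxeter_edge x v y" unfolding coxeter_edge_def
      proof (intro allI impI)
        fix u s' v' z'
        assume H: "v = u @ s' @ v' \<and> s' \<noteq> [] \<and> (\<forall>m\<in>set s'. fst m = z') \<and>
          (u = [] \<or> fst (last u) \<noteq> z') \<and> (v' = [] \<or> fst (hd v') \<noteq> z') \<and> z' \<noteq> x \<and> z' \<noteq> y"
        have "fst (last (s @ u)) \<noteq> z'"
        proof (cases "u = []")
          case True
          then have "v \<noteq> []" "hd v = hd s'" using H by (auto simp: hd_append)
          then have "fst (hd v) = z'" using H by auto
          then have "z \<noteq> z'" using vz \<open>v \<noteq> []\<close> by auto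
          moreover have "fst (last s) = z" using sz sne by auto
          ultimately show ?thesis using True by simp
        next
          case False
          then show ?thesis using H by simp
        qed
        then show "even (expsum s')"
          using less.prems[unfolded coxeter_edge_def, rule_format, of "s @ u" s' v' z'] H wsv sne
          by auto
      qed
      moreover have "length v < length w" using wsv sne by simp
      ultimately show ?thesis using less.hyps by metis
    qed
  qed
qed


fun alt :: "'a \<Rightarrow> 'a \<Rightarrow> nat \<Rightarrow> 'a list" where
  "alt a b 0 = []"
| "alt a b (Suc n) = a # alt b a n"

lemma alt_eq: "rd (a # t) \<Longrightarrow> set t \<subseteq> {a, b} \<Longrightarrow> a # t = alt a b (Suc (length t))"
proof (induction t arbitrary: a b)
  case (Cons c t)
  then have "c = b" by auto
  moreover have "rd (c # t)" using Cons.prems by simp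
  moreover have "set t \<subseteq> {c, a}" using Cons.prems \<open>c = b\<close> by auto
  ultimately show ?case using Cons.IH[of c a] Cons.prems by simp
qed simp

lemma alt_count: "a \<noteq> b \<Longrightarrow> count_list (alt a b L) a = (L + 1) div 2 \<and> count_list (alt a b L) b = L div 2"
  by (induction L arbitrary: a b) auto

lemma alt_even: "alt a b (2 * n) = concat (replicate n [a, b])"
  by (induction n) auto

lemma rd_alt: "a \<noteq> b \<Longrightarrow> rd (alt a b L)"
proof (induction L arbitrary: a b)
  case (Suc L)
  then show ?case by (cases L) auto
qed simp

lemma concat_snoc: "concat (replicate n [x, y]) @ [x] = x # concat (replicate n [y, x])"
  by (induction n) auto

lemma rot_alt: "rotate1 (concat (replicate (Suc n) [x, y])) = concat (replicate (Suc n) [y, x])"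
  using concat_snoc[of n x y] by simp

lemma inv_word_append: "inv_word (a @ b) = inv_word b @ inv_word a"
  by (simp add: inv_word_def)

lemma map_fst_inv: "map fst (inv_word w) = rev (map fst w)"
  unfolding inv_word_def by (induction w) auto

lemma inv_word_single: "inv_word [(a, b)] = [(a, \<not> b)]"
  by (simp add: inv_word_def)

theorem lemma2p3:
  fixes V :: "'a set" and E :: "('a \<times> 'a letter list \<times> 'a) list"
    and x y :: 'a and w :: "'a letter list"
  assumes "is_LOT V E" and "coxeter_type E" and "(x, w, y) \<in> set E"
  shows "\<exists>m::nat. odd m \<and> m \<ge> 1 \<and>
           (\<exists>k. cox_reduce (rotate k (to_cox (relator x w y))) = concat (replicate m [y, x]))"
proof -
  define W where "W = map fst w"
  have xy: "x \<noteq> y" using assms(1,3) unfolding is_LOT_def by auto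
  have ce: "coxeter_edge x w y" using assms(2,3) unfolding coxeter_type_def by auto
  have rel: "map fst (relator x w y) = x # W @ y # rev W"
    unfolding relator_def W_def by (simp add: inv_word_append map_fst_inv inv_word_single)
  define r where "r = cox_reduce W"
  have sr: "set r \<subseteq> {x, y}" using stepA[OF ce] unfolding r_def W_def .
  define t where "t = to_cox (relator x w y)"
  have t1: "t = push x (cox_reduce (W @ y # rev W))" unfolding t_def to_cox_def rel by simp
  have "cox_reduce (W @ y # rev W) = cox_reduce (r @ y # rev W)"
    unfolding r_def by (rule cr_app_left)
  also have "\<dots> = cox_reduce (r @ cox_reduce (y # rev W))" by (rule cr_app_right)
  also have "cox_reduce (y # rev W) = push y (rev r)" unfolding r_def by (simp add: cr_rev)
  finally have t2: "t = push x (cox_reduce (r @ push y (rev r)))" using t1 by simp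
  have "set t \<subseteq> {x, y}"
  proof -
    have "set (push y (rev r)) \<subseteq> {x, y}" using set_push[of y "rev r"] sr by auto
    then have "set (cox_reduce (r @ push y (rev r))) \<subseteq> {x, y}"
      using set_cox[of "r @ push y (rev r)"] sr by auto
    then show ?thesis using t2 set_push[of x "cox_reduce (r @ push y (rev r))"] by auto
  qed
  have cx: "odd (count_list t x)"
    using count_cox[of "x # W @ y # rev W" x] xy unfolding t_def to_cox_def rel by simp
  have cy: "odd (count_list t y)"
    using count_cox[of "x # W @ y # rev W" y] xy unfolding t_def to_cox_def rel by simp
  have rdt: "rd t" unfolding t_def to_cox_def by (rule rd_cox)
  have "t \<noteq> []" using cx by auto
  then obtain a t' where at: "t = a # t'" by (cases t) auto
  have st: "set t \<subseteq> {x, y}" by fact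
  have ain: "a \<in> {x, y}" using at st by auto
  define b where "b = (if a = x then y else x)"
  have ab1: "a \<noteq> b" using ain xy b_def by auto
  have sab: "{a, b} = {x, y}" using ain xy b_def by auto
  define L where "L = length t"
  have st': "set t' \<subseteq> {a, b}" using at st sab by auto
  have talt: "t = alt a b L"
    using alt_eq[of a t' b, OF _ st'] rdt at unfolding L_def by simp
  have oa: "odd (count_list t a)" and ob: "odd (count_list t b)"
    using cx cy ain b_def by auto
  have ca: "odd ((L + 1) div 2)" and cb: "odd (L div 2)"
    using alt_count[OF ab1, of L] oa ob talt by simp_all
  have "even L"
  proof (rule ccontr)
    assume "odd L"
    then obtain j where "L = 2 * j + 1" using oddE by blast
    then show False using ca cb by simp
  qed
  then obtain n where n: "L = 2 * n" by blast
  have on: "odd n" using cb n by simp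
  then obtain n' where n': "n = Suc n'" by (cases n) auto
  have tn: "t = concat (replicate n [a, b])" using talt n alt_even by simp
  show ?thesis
  proof (cases "a = y")
    case True
    then have "b = x" using b_def xy by auto
    have e1: "cox_reduce (rotate 0 t) = t" using cox_reduce_rd[OF rdt] by simp
    have e2: "t = concat (replicate n [y, x])" using tn True \<open>b = x\<close> by simp
    have "odd n \<and> n \<ge> 1 \<and> (\<exists>k. cox_reduce (rotate k t) = concat (replicate n [y, x]))"
      using on n' e1 e2 by (intro conjI exI[of _ 0]) auto
    then show ?thesis unfolding t_def by blast
  next
    case False
    then have "a = x" "b = y" using b_def ain by auto
    then have "rotate 1 t = concat (replicate n [y, x])" using tn n' rot_alt by simp
    moreover have "rd (concat (replicate n [y, x]))" using rd_alt[of y x "2 * n"] xy alt_even by metis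
    ultimately have "cox_reduce (rotate 1 t) = concat (replicate n [y, x])"
      using cox_reduce_rd by metis
    then have "odd n \<and> n \<ge> 1 \<and> (\<exists>k. cox_reduce (rotate k t) = concat (replicate n [y, x]))"
      using on n' by (intro conjI exI[of _ 1]) auto
    then show ?thesis unfolding t_def by blast
  qed
qed

end
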